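(* Let $P$ be a finite set of points in the plane, and call $X\subseteq P$ a clique if the unit disks $D(p,1)$, $p\in X$, pairwise intersect (equivalently, all pairwise distances in $X$ are at most $2$). Let $\mathcal{G}$ be a regular axis-parallel square grid whose cells have diameter $2$, let $C$ be a grid cell containing at least one point of $P$, let $C^+$ be the $5\times 5$ block of grid cells whose central cell is $C$, and let $P_C$ be the set of points of $P$ lying in some cell of $C^+$. Let $\varepsilon>0$. Choose $p_1,p_2\in P_C$ independently and uniformly at random. Let $s$ be the line segment of length $2$ starting at $p_2$ and directed toward $p_1$, let $x$ be its other endpoint, let $L=D(x,2)\cap D(p_2,2)$, and let $P_L=L\cap P_C$. Let $X\subseteq P_L$ be a clique with $|X|\ge(1-\varepsilon/2)|Y^*|$, where $Y^*$ is a maximum clique in $P_L$. Let $X^*$ be a maximum clique in $P_C$. Then there is an absolute constant $c>0$ such that, with probability at least $c\,\varepsilon$ (over the choice of $p_1,p_2$), $|X|\ge(1-\varepsilon)|X^*|$.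
   Context: $D(p,r)$ denotes the closed disk with center $p$ and radius $r$. Grid cells are closed squares. If $p_1=p_2$, the direction of $s$ is arbitrary. *)

theory Defs
  imports "HOL-Analysis.Analysis" "HOL-Probability.Probability"
begin

definition is_clique :: "(real \<times> real) set \<Rightarrow> bool" where
  "is_clique X \<longleftrightarrow> (\<forall>p\<in>X. \<forall>q\<in>X. cball p 1 \<inter> cball q 1 \<noteq> {})"

definition clique_number :: "(real \<times> real) set \<Rightarrow> nat" where
  "clique_number S = Max (card ` {X. X \<subseteq> S \<and> is_clique X})"

text \<open>Regular axis-parallel square grid with offset (a,b) and side length sqrt 2
  (so every cell has diameter 2); cell (i,j) is a closed square.\<close>
definition grid_cell :: "real \<Rightarrow> real \<Rightarrow> int \<Rightarrow> int \<Rightarrow> (real \<times> real) set" where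
  "grid_cell a b i j =
     {z. a + of_int i * sqrt 2 \<le> fst z \<and> fst z \<le> a + of_int (i + 1) * sqrt 2 \<and>
         b + of_int j * sqrt 2 \<le> snd z \<and> snd z \<le> b + of_int (j + 1) * sqrt 2}"

definition block_points :: "real \<Rightarrow> real \<Rightarrow> int \<Rightarrow> int \<Rightarrow> (real \<times> real) set \<Rightarrow> (real \<times> real) set" where
  "block_points a b i j P =
     {p \<in> P. \<exists>di dj. \<bar>di\<bar> \<le> 2 \<and> \<bar>dj\<bar> \<le> 2 \<and> p \<in> grid_cell a b (i + di) (j + dj)}"

text \<open>The lens L = D(x,2) \<inter> D(p2,2), where x = p2 + 2 u is the other endpoint of the
  length-2 segment starting at p2 in unit direction u.\<close>
definition lens :: "real \<times> real \<Rightarrow> real \<times> real \<Rightarrow> (real \<times> real) set" where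
  "lens p2 u = cball (p2 + 2 *\<^sub>R u) 2 \<inter> cball p2 2"

end

theory Submission
  imports Defs
begin

lemma clique_dist: "is_clique X \<longleftrightarrow> (\<forall>p\<in>X. \<forall>q\<in>X. dist p q \<le> 2)"
proof -
  have "cball p 1 \<inter> cball q 1 \<noteq> {} \<longleftrightarrow> dist p q \<le> 2" for p q :: "real \<times> real"
  proof
    assume "cball p 1 \<inter> cball q 1 \<noteq> {}"
    then obtain z where "dist p z \<le> 1" "dist q z \<le> 1" by auto
    then show "dist p q \<le> 2" by (smt (verit) dist_commute dist_triangle)
  next
    assume h: "dist p q \<le> 2"
    have "midpoint p q \<in> cball p 1 \<inter> cball q 1"
      using h by (simp add: dist_midpoint)
    then show "cball p 1 \<inter> cball q 1 \<noteq> {}" by auto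
  qed
  then show ?thesis unfolding is_clique_def by auto
qed

lemma clique_sets_finite:
  assumes "finite S" shows "finite {X. X \<subseteq> S \<and> is_clique X}"
  using assms by (rule finite_subset[rotated, OF finite_Pow_iff[THEN iffD2]]) auto

lemma clique_number_ge:
  assumes "finite S" "X \<subseteq> S" "is_clique X"
  shows "card X \<le> clique_number S"
  unfolding clique_number_def
  using assms clique_sets_finite[OF assms(1)] by (intro Max_ge) auto

lemma clique_number_attained:
  assumes "finite S"
  shows "\<exists>X\<subseteq>S. is_clique X \<and> card X = clique_number S"
proof -
  have "{} \<in> {X. X \<subseteq> S \<and> is_clique X}" by (auto simp: is_clique_def)
  then have "clique_number S \<in> card ` {X. X \<subseteq> S \<and> is_clique X}"
    unfolding clique_number_def using clique_sets_finite[OF assms]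
    by (intro Max_in) auto
  then show ?thesis by auto
qed

lemma cell_dist:
  assumes "p \<in> grid_cell a b i j" "q \<in> grid_cell a b i j"
  shows "dist p q \<le> 2"
proof -
  obtain p1 p2 q1 q2 where pq: "p = (p1,p2)" "q = (q1,q2)" by fastforce
  have s: "sqrt 2 * sqrt 2 = (2::real)" by simp
  have "\<bar>p1 - q1\<bar> \<le> sqrt 2" "\<bar>p2 - q2\<bar> \<le> sqrt 2"
    using assms unfolding grid_cell_def pq by (auto simp: algebra_simps)
  then have "(p1 - q1)^2 \<le> 2" "(p2 - q2)^2 \<le> 2"
    by (metis abs_ge_zero power2_abs real_sqrt_le_iff real_sqrt_pow2 zero_le_numeral
        power_mono s power2_eq_square)+
  then have "(p1 - q1)^2 + (p2 - q2)^2 \<le> 2^2" by simp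
  then have "sqrt ((p1 - q1)^2 + (p2 - q2)^2) \<le> sqrt (2^2)" by (rule real_sqrt_le_mono)
  then show ?thesis unfolding pq dist_Pair_Pair dist_real_def by simp
qed

lemma top_m:
  fixes f :: "'a \<Rightarrow> real"
  assumes "finite X" "m \<le> card X"
  shows "\<exists>T\<subseteq>X. card T = m \<and> (\<forall>t\<in>T. \<forall>q\<in>X - T. f q \<le> f t)"
  using assms(2)
proof (induction m)
  case 0 then show ?case by auto
next
  case (Suc m)
  then obtain T where T: "T \<subseteq> X" "card T = m" "\<forall>t\<in>T. \<forall>q\<in>X - T. f q \<le> f t" by auto
  have fin: "finite (X - T)" using assms(1) by auto
  have "card T < card X" using Suc T by auto
  have ne: "X - T \<noteq> {}"
  proof
    assume "X - T = {}" then have "X = T" using T(1) by auto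
    then show False using \<open>card T < card X\<close> by simp
  qed
  have "Max (f ` (X - T)) \<in> f ` (X - T)" by (rule Max_in) (use fin ne in auto)
  then obtain t' where t'0: "t' \<in> X - T" "f t' = Max (f ` (X - T))" by auto
  have t': "t' \<in> X - T" "\<forall>q\<in>X - T. f q \<le> f t'"
    using t'0 fin by auto
  have fT: "finite T" using T(1) assms(1) finite_subset by blast
  show ?case
    apply (rule exI[of _ "insert t' T"])
    using T t' fT by auto
qed

lemma lens_mem:
  fixes p1 p2 q u :: "real \<times> real"
  assumes u1: "norm u = 1" and ud: "p1 \<noteq> p2 \<longrightarrow> u = (1 / norm (p1 - p2)) *\<^sub>R (p1 - p2)"
    and d2: "dist p1 p2 \<le> 2" and q2: "dist p2 q \<le> 2" and qp1: "dist q p1 \<le> dist p2 p1"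
  shows "q \<in> lens p2 u"
proof -
  define d where "d = norm (p1 - p2)"
  have pd: "p1 - p2 = d *\<^sub>R u"
    using ud by (cases "p1 = p2") (auto simp: d_def)
  define v where "v = q - p2"
  define w where "w = v \<bullet> u"
  have uu: "u \<bullet> u = 1" using u1 by (simp add: norm_eq_1)
  have d0: "d \<ge> 0" "d \<le> 2" using d2 by (auto simp: d_def dist_norm)
  have "dist q p1 ^2 \<le> d^2" using qp1 d0 by (simp add: d_def dist_norm power_mono norm_minus_commute)
  moreover have "dist q p1 ^2 = v \<bullet> v - 2 * d * w + d^2"
  proof -
    have "q - p1 = v - d *\<^sub>R u" using pd unfolding v_def by (simp add: algebra_simps)
    then have "dist q p1 ^2 = (v - d *\<^sub>R u) \<bullet> (v - d *\<^sub>R u)"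
      by (simp add: dist_norm power2_norm_eq_inner)
    then show ?thesis unfolding w_def
      by (simp add: inner_diff_left inner_diff_right uu algebra_simps power2_eq_square inner_commute)
  qed
  ultimately have h: "v \<bullet> v \<le> 2 * d * w" by simp
  have vv: "v \<bullet> v \<ge> 0" by simp
  have "norm (p2 + 2 *\<^sub>R u - q) ^2 = v \<bullet> v - 4 * w + 4"
  proof -
    have "p2 + 2 *\<^sub>R u - q = 2 *\<^sub>R u - v" unfolding v_def by (simp add: algebra_simps)
    then have "norm (p2 + 2 *\<^sub>R u - q) ^2 = (2 *\<^sub>R u - v) \<bullet> (2 *\<^sub>R u - v)"
      by (metis power2_norm_eq_inner)
    then show ?thesis unfolding w_def
      by (simp add: inner_diff_left inner_diff_right uu algebra_simps inner_commute)
  qed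
  also have "\<dots> \<le> 4"
  proof (cases "d = 0")
    case True then show ?thesis using h vv by (simp add: w_def)
  next
    case False
    then have "w \<ge> 0" using h vv d0 by (smt (verit) mult_nonneg_nonneg zero_le_mult_iff)
    then have "2 * d * w \<le> 4 * w" using d0 by (simp add: mult_right_mono)
    then show ?thesis using h by simp
  qed
  finally have "norm (p2 + 2 *\<^sub>R u - q) ^ 2 \<le> 2 ^ 2" by simp
  then have "norm (p2 + 2 *\<^sub>R u - q) \<le> 2" by (rule power2_le_imp_le) simp
  then show ?thesis using q2 unfolding lens_def by (simp add: dist_norm)
qed

lemma pair_pmf_of_set:
  assumes "finite A" "A \<noteq> {}" "finite B" "B \<noteq> {}"
  shows "pair_pmf (pmf_of_set A) (pmf_of_set B) = pmf_of_set (A \<times> B)"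
  by (rule pmf_eqI) (auto simp: pmf_pair assms card_cartesian_product indicator_def)

lemma main:
  fixes P :: "(real \<times> real) set" and \<epsilon> :: real
    and dir :: "real \<times> real \<Rightarrow> real \<times> real \<Rightarrow> real \<times> real"
    and Xs :: "real \<times> real \<Rightarrow> real \<times> real \<Rightarrow> (real \<times> real) set"
  assumes finP: "finite P" and neP: "P \<inter> grid_cell a b i j \<noteq> {}"
    and e0: "0 < \<epsilon>" and e1: "\<epsilon> \<le> 1"
    and hdir: "\<forall>p1\<in>block_points a b i j P. \<forall>p2\<in>block_points a b i j P.
          norm (dir p1 p2) = 1 \<and>
          (p1 \<noteq> p2 \<longrightarrow> dir p1 p2 = (1 / norm (p1 - p2)) *\<^sub>R (p1 - p2))"
    and hX: "\<forall>p1\<in>block_points a b i j P. \<forall>p2\<in>block_points a b i j P.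
          Xs p1 p2 \<subseteq> lens p2 (dir p1 p2) \<inter> block_points a b i j P \<and>
          is_clique (Xs p1 p2) \<and>
          real (card (Xs p1 p2)) \<ge>
            (1 - \<epsilon> / 2) * real (clique_number (lens p2 (dir p1 p2) \<inter> block_points a b i j P))"
  shows "measure_pmf.prob
        (pair_pmf (pmf_of_set (block_points a b i j P)) (pmf_of_set (block_points a b i j P)))
        {(p1, p2). real (card (Xs p1 p2)) \<ge> (1 - \<epsilon>) * real (clique_number (block_points a b i j P))}
        \<ge> 1 / 1250 * \<epsilon>"
proof -
  define S where "S = block_points a b i j P"
  define k where "k = clique_number S"
  have finS: "finite S" using finP unfolding S_def block_points_def by auto
  obtain p0 where p0: "p0 \<in> P" "p0 \<in> grid_cell a b i j" using neP by auto
  have p0S: "p0 \<in> S" unfolding S_def block_points_def using p0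
    by (auto intro!: exI[of _ 0])
  have neS: "S \<noteq> {}" using p0S by auto
  obtain Xst where Xst: "Xst \<subseteq> S" "is_clique Xst" "card Xst = k"
    using clique_number_attained[OF finS] k_def by auto
  have finX: "finite Xst" using Xst(1) finS finite_subset by blast
  have k1: "1 \<le> k"
  proof -
    have "is_clique {p0}" by (simp add: clique_dist)
    then have "card {p0} \<le> k" unfolding k_def using finS p0S by (intro clique_number_ge) auto
    then show ?thesis by simp
  qed
  define n where "n = card S"
  define I where "I = {-2..2::int} \<times> {-2..2::int}"
  have n25: "n \<le> 25 * k"
  proof -
    have "S = (\<Union>(di,dj)\<in>I. S \<inter> grid_cell a b (i + di) (j + dj))"
    proof (rule set_eqI, rule iffI)
      fix z assume "z \<in> S"
      then obtain di dj where "\<bar>di\<bar> \<le> 2" "\<bar>dj\<bar> \<le> 2" "z \<in> grid_cell a b (i + di) (j + dj)"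
        unfolding S_def block_points_def by auto
      moreover then have "(di, dj) \<in> I" unfolding I_def by auto
      ultimately show "z \<in> (\<Union>(di,dj)\<in>I. S \<inter> grid_cell a b (i + di) (j + dj))"
        using \<open>z \<in> S\<close> by blast
    qed auto
    then have "n \<le> (\<Sum>(di,dj)\<in>I. card (S \<inter> grid_cell a b (i + di) (j + dj)))"
      unfolding n_def using card_UN_le[of I "\<lambda>(di,dj). S \<inter> grid_cell a b (i + di) (j + dj)"]
      by (simp add: I_def case_prod_unfold)
    also have "\<dots> \<le> of_nat (card I) * k"
    proof (rule sum_bounded_above)
      fix x assume "x \<in> I"
      obtain di dj where x: "x = (di, dj)" by fastforce
      have "is_clique (S \<inter> grid_cell a b (i + di) (j + dj))"
        unfolding clique_dist using cell_dist by blast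
      then show "(case x of (di, dj) \<Rightarrow> card (S \<inter> grid_cell a b (i + di) (j + dj))) \<le> k"
        unfolding x k_def using finS by (auto intro: clique_number_ge)
    qed
    also have "of_nat (card I) * k = 25 * k" unfolding I_def by simp
    finally show ?thesis .
  qed
  define m where "m = nat \<lceil>\<epsilon> * k / 2\<rceil>"
  have mge: "real m \<ge> \<epsilon> * k / 2" unfolding m_def by linarith
  have x0: "\<epsilon> * k / 2 > 0" using e0 k1 by simp
  have "real m = of_int \<lceil>\<epsilon> * k / 2\<rceil>" unfolding m_def using x0 by simp
  then have mlt: "real m < \<epsilon> * k / 2 + 1" using ceiling_correct[of "\<epsilon> * k / 2"] by linarith
  have mk: "m \<le> card Xst"
  proof -
    have "\<epsilon> * k / 2 \<le> k" using e0 e1 k1 by (simp add: mult_left_le_one_le)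
    then have "real m \<le> k" unfolding m_def by (simp add: ceiling_le_iff)  
    then show ?thesis using Xst(3) by simp
  qed
  have "\<forall>p1\<in>Xst. \<exists>T. T \<subseteq> Xst \<and> card T = m \<and> (\<forall>t\<in>T. \<forall>q\<in>Xst - T. dist q p1 \<le> dist t p1)"
  proof
    fix p1 assume "p1 \<in> Xst"
    show "\<exists>T. T \<subseteq> Xst \<and> card T = m \<and> (\<forall>t\<in>T. \<forall>q\<in>Xst - T. dist q p1 \<le> dist t p1)"
      using top_m[OF finX mk, of "\<lambda>q. dist q p1"] by auto
  qed
  from bchoice[OF this] obtain T where T: "\<forall>p1\<in>Xst. T p1 \<subseteq> Xst \<and> card (T p1) = m \<and>
      (\<forall>t\<in>T p1. \<forall>q\<in>Xst - T p1. dist q p1 \<le> dist t p1)"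
    by blast
  define E where "E = {(p1, p2). real (card (Xs p1 p2)) \<ge> (1 - \<epsilon>) * real (clique_number S)}"
  define G where "G = Sigma Xst T"
  have finT: "finite (T p1)" if "p1 \<in> Xst" for p1 using T that finX finite_subset by blast
  have "card G = (\<Sum>a\<in>Xst. card (T a))" unfolding G_def using finX finT by simp
  also have "\<dots> = (\<Sum>a\<in>Xst. m)" using T by (intro sum.cong) auto
  finally have cardG: "card G = k * m" using Xst(3) by simp
  have GSS: "G \<subseteq> S \<times> S" unfolding G_def using T Xst(1) by blast
  have GE: "G \<subseteq> E"
  proof
    fix x assume "x \<in> G"
    then obtain p1 p2 where x: "x = (p1, p2)" and p1: "p1 \<in> Xst" and p2: "p2 \<in> T p1"
      unfolding G_def by auto
    have p2X: "p2 \<in> Xst" using T p1 p2 by auto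
    have p1S: "p1 \<in> S" and p2S: "p2 \<in> S" using p1 p2X Xst(1) by auto
    define L where "L = lens p2 (dir p1 p2) \<inter> S"
    have finL: "finite L" using finS unfolding L_def by auto
    have hd: "norm (dir p1 p2) = 1" "p1 \<noteq> p2 \<longrightarrow> dir p1 p2 = (1 / norm (p1 - p2)) *\<^sub>R (p1 - p2)"
      using hdir p1S p2S unfolding S_def by auto
    have inL: "q \<in> L" if "q \<in> Xst" "dist q p1 \<le> dist p2 p1" for q
    proof -
      have "dist p1 p2 \<le> 2" "dist p2 q \<le> 2" using Xst(2) p1 p2X that(1) unfolding clique_dist by auto
      then have "q \<in> lens p2 (dir p1 p2)" using lens_mem[OF hd(1) hd(2)] that(2) by blast
      then show ?thesis unfolding L_def using that(1) Xst(1) by auto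
    qed
    have sub: "Xst - L \<subseteq> T p1 - {p2}"
    proof
      fix q assume q: "q \<in> Xst - L"
      have "q \<noteq> p2" using inL[OF p2X] q by auto
      moreover have "q \<in> T p1"
      proof (rule ccontr)
        assume "q \<notin> T p1"
        then have "dist q p1 \<le> dist p2 p1" using T p1 p2 q by auto
        then show False using inL[of q] q by blast
      qed
      ultimately show "q \<in> T p1 - {p2}" by auto
    qed
    have "card (Xst - L) \<le> card (T p1 - {p2})" using sub finT[OF p1] by (intro card_mono) auto
    also have "\<dots> = m - 1" using T p1 p2 finT[OF p1] by simp
    finally have c1: "card (Xst - L) \<le> m - 1" .
    have "card (Xst \<inter> L) + card (Xst - L) = k"
      using card_Int_Diff[OF finX, of L] Xst(3) by simp
    then have e: "real (card (Xst \<inter> L)) + real (card (Xst - L)) = real k"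
      by (metis of_nat_add)
    have m1: "m \<ge> 1" using T p1 p2 finT[OF p1] by (metis One_nat_def Suc_leI card_gt_0_iff empty_iff)
    have "real (card (Xst - L)) \<le> real (m - 1)" using c1 by (rule of_nat_mono)
    also have "\<dots> = real m - 1" using m1 by simp
    finally have c2: "real (card (Xst \<inter> L)) \<ge> real k - (real m - 1)" using e by linarith
    have "is_clique (Xst \<inter> L)" using Xst(2) unfolding clique_dist by auto
    then have "card (Xst \<inter> L) \<le> clique_number L" using finL by (intro clique_number_ge) auto
    then have "real (card (Xst \<inter> L)) \<le> real (clique_number L)" by simp
    moreover have "(1 - \<epsilon>/2) * k = k - \<epsilon> * k / 2" by (simp add: algebra_simps)
    ultimately have cL: "real (clique_number L) \<ge> (1 - \<epsilon>/2) * k"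
      using c2 mlt by linarith
    have hx: "real (card (Xs p1 p2)) \<ge> (1 - \<epsilon> / 2) * real (clique_number L)"
      using hX p1S p2S unfolding S_def L_def by auto
    have "(1 - \<epsilon> / 2) * real (clique_number L) \<ge> (1 - \<epsilon> / 2) * ((1 - \<epsilon>/2) * k)"
      using cL e1 by (intro mult_left_mono) auto
    moreover have "(1 - \<epsilon> / 2) * ((1 - \<epsilon>/2) * k) \<ge> (1 - \<epsilon>) * k"
    proof -
      have "(1 - \<epsilon> / 2) * (1 - \<epsilon>/2) = 1 - \<epsilon> + (\<epsilon>/2) * (\<epsilon>/2)" by (simp add: algebra_simps)
      moreover have "(\<epsilon>/2) * (\<epsilon>/2) \<ge> 0" by simp
      ultimately have "(1 - \<epsilon> / 2) * (1 - \<epsilon>/2) \<ge> 1 - \<epsilon>" by linarith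
      then show ?thesis by (metis mult.assoc mult_right_mono of_nat_0_le_iff)
    qed
    ultimately show "x \<in> E" unfolding E_def x k_def using hx by auto
  qed
  have finSS: "finite (S \<times> S)" using finS by simp
  have peq: "measure_pmf.prob (pair_pmf (pmf_of_set S) (pmf_of_set S)) E = card ((S \<times> S) \<inter> E) / card (S \<times> S)"
    using pair_pmf_of_set[OF finS neS finS neS] measure_pmf_of_set[of "S \<times> S" E] finS neS by simp
  have ge1: "card ((S \<times> S) \<inter> E) / card (S \<times> S) \<ge> card G / (n * n)"
  proof -
    have "card G \<le> card ((S \<times> S) \<inter> E)" using GSS GE finSS by (intro card_mono) auto
    then show ?thesis unfolding n_def by (simp add: card_cartesian_product divide_right_mono)
  qed
  have ge2: "real (card G) / (n * n) \<ge> 1 / 1250 * \<epsilon>"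
  proof -
    have npos: "n > 0" unfolding n_def using finS neS by (simp add: card_gt_0_iff)
    have n25r: "real n \<le> 25 * real k" using n25 by (metis of_nat_mono of_nat_mult of_nat_numeral)
    have "real n * n \<le> (25 * k) * (25 * k)" using mult_mono[OF n25r n25r] by simp
    then have "real (card G) / (n * n) \<ge> (k * m) / ((25 * k) * (25 * k))"
      unfolding cardG using npos k1 by (intro divide_left_mono) auto
    also have "(k * m) / ((25 * k) * (25 * k)) = m / (625 * k)" using k1 by simp
    also have "m / (625 * k) \<ge> (\<epsilon> * k / 2) / (625 * k)" using mge k1 by (intro divide_right_mono) auto
    also have "(\<epsilon> * k / 2) / (625 * k) = 1 / 1250 * \<epsilon>" using k1 by simp
    finally show ?thesis by simp
  qed
  have "measure_pmf.prob (pair_pmf (pmf_of_set S) (pmf_of_set S)) E \<ge> 1 / 1250 * \<epsilon>"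
    using peq ge1 ge2 by linarith
  then show ?thesis unfolding S_def E_def by simp
qed

theorem lemma7:
  "\<exists>c::real. c > 0 \<and>
    (\<forall>(P :: (real \<times> real) set) (a::real) (b::real) (i::int) (j::int) (\<epsilon>::real)
       (dir :: real \<times> real \<Rightarrow> real \<times> real \<Rightarrow> real \<times> real)
       (Xs :: real \<times> real \<Rightarrow> real \<times> real \<Rightarrow> (real \<times> real) set).
      finite P \<longrightarrow>
      P \<inter> grid_cell a b i j \<noteq> {} \<longrightarrow>
      0 < \<epsilon> \<longrightarrow> \<epsilon> \<le> 1 \<longrightarrow>
      (\<forall>p1\<in>block_points a b i j P. \<forall>p2\<in>block_points a b i j P.
          norm (dir p1 p2) = 1 \<and>
          (p1 \<noteq> p2 \<longrightarrow> dir p1 p2 = (1 / norm (p1 - p2)) *\<^sub>R (p1 - p2))) \<longrightarrow>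
      (\<forall>p1\<in>block_points a b i j P. \<forall>p2\<in>block_points a b i j P.
          Xs p1 p2 \<subseteq> lens p2 (dir p1 p2) \<inter> block_points a b i j P \<and>
          is_clique (Xs p1 p2) \<and>
          real (card (Xs p1 p2)) \<ge>
            (1 - \<epsilon> / 2) * real (clique_number (lens p2 (dir p1 p2) \<inter> block_points a b i j P))) \<longrightarrow>
      measure_pmf.prob
        (pair_pmf (pmf_of_set (block_points a b i j P)) (pmf_of_set (block_points a b i j P)))
        {(p1, p2). real (card (Xs p1 p2)) \<ge> (1 - \<epsilon>) * real (clique_number (block_points a b i j P))}
        \<ge> c * \<epsilon>)"
  apply (rule exI[of _ "1/1250"])
  apply (intro conjI allI impI)
   apply simp
  apply (rule main)
       apply assumption+
  done

end
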